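(* Let $\Sigma$ be a finite alphabet, $\lambda\in[0,1)$, and let $L=\mathcal{L}^{>\lambda}(\mathcal{A}|\mathrm{ND})$ for some quantum automaton $\mathcal{A}$ over $\Sigma$. Then: (1) For any $w\in\Sigma^+$, $u\in\Sigma^*$ and $v\in\Sigma^\omega$, if $uv\in L$ then there are infinitely many positive integers $k$ such that $uw^kv\in L$. (2) For any $v\in L$, there are infinitely many finite prefixes $v_n$ of $v$ such that $v_nw^\omega\in L$ for all $w\in\Sigma^+$.
   Context: A quantum automaton is a tuple $\mathcal{A}=(\mathcal{H},|s_0\rangle,\Sigma,\{U_\sigma:\sigma\in\Sigma\},F)$ where $\mathcal{H}$ is a finite-dimensional complex Hilbert space, $|s_0\rangle$ a unit vector, $\Sigma$ a finite alphabet, each $U_\sigma$ unitary on $\mathcal{H}$, and $F$ a subspace of $\mathcal{H}$. For a finite word $x=\sigma_1\cdots\sigma_m$, $U_x=U_{\sigma_m}\cdots U_{\sigma_1}$. For $w\in\Sigma^\omega$ with prefixes $w_n$ of length $n$, the non-disturbing run is $|s_n\rangle=U_{w_n}|s_0\rangle$ and $$f^{\mathrm{ND}}_{\mathcal{A}}(w)=\sup_{|\psi\rangle\in F,\ \||\psi\rangle\|=1}\sup_{\{n_i\}}\inf_{i\ge1}|\langle\psi|s_{n_i}\rangle|^2,$$ over strictly increasing sequences $0\le n_1<n_2<\cdots$. $\mathcal{L}^{>\lambda}(\mathcal{A}|\mathrm{ND})=\{w\in\Sigma^\omega: f^{\mathrm{ND}}_{\mathcal{A}}(w)>\lambda\}$.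 $w^\omega$ denotes the infinite repetition of $w$. *)

theory Defs
  imports "HOL-Analysis.Analysis" "HOL-Library.Omega_Words_Fun"
begin

definition cinner :: "complex ^ 'n \<Rightarrow> complex ^ 'n \<Rightarrow> complex" where
  "cinner x y = (\<Sum>i\<in>UNIV. cnj (x $ i) * y $ i)"

definition cadjoint :: "complex ^ 'n ^ 'n \<Rightarrow> complex ^ 'n ^ 'n" where
  "cadjoint A = (\<chi> i j. cnj (A $ j $ i))"

definition unitary :: "complex ^ 'n ^ 'n \<Rightarrow> bool" where
  "unitary A \<longleftrightarrow> cadjoint A ** A = mat 1 \<and> A ** cadjoint A = mat 1"

definition csubspace :: "(complex ^ 'n) set \<Rightarrow> bool" where
  "csubspace F \<longleftrightarrow> 0 \<in> F \<and> (\<forall>x\<in>F. \<forall>y\<in>F. x + y \<in> F)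
     \<and> (\<forall>c::complex. \<forall>x\<in>F. (\<chi> i. c * x $ i) \<in> F)"

text \<open>Quantum automaton (H = complex^'n, s0, Sigma = UNIV :: 'a set, U, F).\<close>
definition quantum_automaton ::
  "complex ^ 'n \<Rightarrow> ('a \<Rightarrow> complex ^ 'n ^ 'n) \<Rightarrow> (complex ^ 'n) set \<Rightarrow> bool" where
  "quantum_automaton s0 U F \<longleftrightarrow> norm s0 = 1 \<and> (\<forall>\<sigma>. unitary (U \<sigma>)) \<and> csubspace F"

primrec run :: "complex ^ 'n \<Rightarrow> ('a \<Rightarrow> complex ^ 'n ^ 'n) \<Rightarrow> 'a word \<Rightarrow> nat \<Rightarrow> complex ^ 'n" where
  "run s0 U w 0 = s0"
| "run s0 U w (Suc n) = U (w n) *v run s0 U w n"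

text \<open>f^ND; the supremum of the empty set is taken to be 0 (all values are \<ge> 0).\<close>
definition fND :: "complex ^ 'n \<Rightarrow> ('a \<Rightarrow> complex ^ 'n ^ 'n) \<Rightarrow> (complex ^ 'n) set \<Rightarrow> 'a word \<Rightarrow> real" where
  "fND s0 U F w = Sup ({(INF i. (cmod (cinner \<psi> (run s0 U w (ns i))))\<^sup>2) | \<psi> ns.
        \<psi> \<in> F \<and> norm \<psi> = 1 \<and> strict_mono (ns :: nat \<Rightarrow> nat)} \<union> {0})"

definition lang_ND :: "complex ^ 'n \<Rightarrow> ('a \<Rightarrow> complex ^ 'n ^ 'n) \<Rightarrow> (complex ^ 'n) set \<Rightarrow> real \<Rightarrow> 'a word set" where
  "lang_ND s0 U F lam = {w. fND s0 U F w > lam}"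

end

theory Submission imports Defs begin

lemma cinner_self: "cinner x x = complex_of_real ((norm x)^2)"
proof -
  have "(norm x)^2 = (\<Sum>i\<in>UNIV. (cmod (x $ i))^2)"
    by (simp add: norm_vec_def L2_set_def sum_nonneg)
  moreover have "cinner x x = (\<Sum>i\<in>UNIV. complex_of_real ((cmod (x $ i))^2))"
    unfolding cinner_def
    by (rule sum.cong) (simp_all add: complex_mult_cnj cmod_power2 mult.commute)
  ultimately show ?thesis by simp
qed

lemma cinner_mv: "cinner (A *v x) y = cinner x (cadjoint A *v y)"
proof -
  have "cinner (A *v x) y = (\<Sum>i\<in>UNIV. \<Sum>j\<in>UNIV. cnj (A$i$j) * cnj (x$j) * y$i)"
    unfolding cinner_def matrix_vector_mult_def
    by (simp add: cnj_sum sum_distrib_right)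
  also have "\<dots> = (\<Sum>j\<in>UNIV. \<Sum>i\<in>UNIV. cnj (A$i$j) * cnj (x$j) * y$i)"
    by (rule sum.swap)
  also have "\<dots> = cinner x (cadjoint A *v y)"
    unfolding cinner_def matrix_vector_mult_def cadjoint_def
    by (simp add: sum_distrib_left mult_ac)
  finally show ?thesis .
qed

lemma unitary_norm:
  assumes "unitary A" shows "norm (A *v x) = norm x"
proof -
  have "cinner (A *v x) (A *v x) = cinner x x"
    using assms by (simp add: cinner_mv matrix_vector_mul_assoc unitary_def)
  then have "(norm (A *v x))^2 = (norm x)^2" by (metis cinner_self of_real_eq_iff)
  then show ?thesis by (simp add: power2_eq_iff_nonneg)
qed

lemma cinner_diff: "cinner p (a - b) = cinner p a - cinner p b"
  by (simp add: cinner_def sum_subtractf right_diff_distrib)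

lemma cinner_cs: "cmod (cinner p a) \<le> norm p * norm a"
proof -
  have "cmod (cinner p a) \<le> (\<Sum>i\<in>UNIV. cmod (cnj (p $ i) * a $ i))"
    unfolding cinner_def by (rule norm_sum)
  also have "\<dots> = (\<Sum>i\<in>UNIV. \<bar>cmod (p $ i)\<bar> * \<bar>cmod (a $ i)\<bar>)"
    by (simp add: norm_mult)
  also have "\<dots> \<le> norm p * norm a"
    unfolding norm_vec_def by (rule L2_set_mult_ineq)
  finally show ?thesis .
qed

definition val :: "complex ^ 'n \<Rightarrow> complex ^ 'n \<Rightarrow> real" where
  "val p a = (cmod (cinner p a))\<^sup>2"

lemma val_le1: "norm p = 1 \<Longrightarrow> norm a = 1 \<Longrightarrow> val p a \<le> 1"
proof -
  assume "norm p = 1" "norm a = 1"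
  then have "cmod (cinner p a) \<le> 1" using cinner_cs[of p a] by simp
  then show ?thesis by (simp add: val_def power_le_one)
qed

lemma val_lip:
  assumes "norm p = 1" "norm a = 1" "norm b = 1"
  shows "val p a \<ge> val p b - 2 * norm (a - b)"
proof -
  let ?x = "cmod (cinner p a)" and ?y = "cmod (cinner p b)"
  have xa: "?x \<le> 1" "?y \<le> 1" using cinner_cs[of p a] cinner_cs[of p b] assms by auto
  have "\<bar>?y - ?x\<bar> \<le> cmod (cinner p b - cinner p a)" by (rule norm_triangle_ineq3)
  also have "\<dots> = cmod (cinner p (b - a))" by (simp add: cinner_diff)
  also have "\<dots> \<le> norm (b - a)" using cinner_cs[of p "b - a"] assms by simp
  also have "\<dots> = norm (a - b)" by (rule norm_minus_commute)
  finally have d: "\<bar>?y - ?x\<bar> \<le> norm (a - b)" .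
  have "?y^2 - ?x^2 = (?y + ?x) * (?y - ?x)" by (simp add: power2_eq_square algebra_simps)
  also have "\<dots> \<le> 2 * norm (a - b)"
  proof -
    have "(?y + ?x) * (?y - ?x) \<le> (?y + ?x) * \<bar>?y - ?x\<bar>"
      by (intro mult_left_mono) auto
    also have "\<dots> \<le> 2 * norm (a - b)"
      using d xa by (intro mult_mono) auto
    finally show ?thesis .
  qed
  finally show ?thesis by (simp add: val_def)
qed

definition lrun :: "complex ^ 'n \<Rightarrow> ('a \<Rightarrow> complex ^ 'n ^ 'n) \<Rightarrow> 'a list \<Rightarrow> complex ^ 'n" where
  "lrun s U x = foldl (\<lambda>s a. U a *v s) s x"

lemma lrun_append: "lrun s U (x @ y) = lrun (lrun s U x) U y"
  by (simp add: lrun_def)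

lemma lrun_rep: "lrun s U (concat (replicate k w)) = ((\<lambda>t. lrun t U w) ^^ k) s"
  by (induction k arbitrary: s) (simp_all add: lrun_def funpow_Suc_right del: funpow.simps)

lemma lrun_lin: "lrun (s - t) U x = lrun s U x - lrun t U x"
  by (induction x arbitrary: s t) (simp_all add: lrun_def matrix_vector_mult_diff_distrib)

lemma lrun_norm: "(\<forall>a. unitary (U a)) \<Longrightarrow> norm (lrun s U x) = norm s"
  by (induction x arbitrary: s) (simp_all add: lrun_def unitary_norm)

lemma run_conc_take: "n \<le> length x \<Longrightarrow> run s0 U (x \<frown> v) n = lrun s0 U (take n x)"
proof (induction n)
  case 0 then show ?case by (simp add: lrun_def)
next
  case (Suc n)
  then show ?case by (simp add: take_Suc_conv_app_nth lrun_append) (simp add: lrun_def)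
qed

lemma run_conc: "run s0 U (x \<frown> v) (length x + n) = run (lrun s0 U x) U v n"
  by (induction n) (simp_all add: run_conc_take)

lemma run_lin: "run (s - t) U v n = run s U v n - run t U v n"
  by (induction n) (simp_all add: matrix_vector_mult_diff_distrib)

lemma run_norm: "(\<forall>a. unitary (U a)) \<Longrightarrow> norm (run s U v n) = norm s"
  by (induction n) (simp_all add: unitary_norm)

lemma recur_aux:
  fixes V :: "complex ^ 'n \<Rightarrow> complex ^ 'n"
  assumes lin: "\<And>s t. V (s - t) = V s - V t" and nrm: "\<And>s. norm (V s) = norm s"
    and e: "e > 0"
  shows "\<exists>d>0. norm ((V ^^ d) x - x) < e"
proof -
  have lin': "\<And>s t m. (V ^^ m) (s - t) = (V ^^ m) s - (V ^^ m) t"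
  proof -
    fix s t m show "(V ^^ m) (s - t) = (V ^^ m) s - (V ^^ m) t"
      by (induction m) (simp_all add: lin)
  qed
  have nrm': "\<And>s m. norm ((V ^^ m) s) = norm s"
  proof -
    fix s m show "norm ((V ^^ m) s) = norm s" by (induction m) (simp_all add: nrm)
  qed
  have "bounded (range (\<lambda>m. (V ^^ m) x))"
    by (rule boundedI[of _ "norm x"]) (auto simp: nrm')
  then obtain l r where r: "strict_mono r" "((\<lambda>m. (V ^^ m) x) \<circ> r) \<longlonglongrightarrow> l"
    using bounded_imp_convergent_subsequence by blast
  from r(2) have "Cauchy ((\<lambda>m. (V ^^ m) x) \<circ> r)" by (rule LIMSEQ_imp_Cauchy)
  then obtain M where M: "\<And>m n. m \<ge> M \<Longrightarrow> n \<ge> M \<Longrightarrow> dist (((\<lambda>m. (V ^^ m) x) \<circ> r) m) (((\<lambda>m. (V ^^ m) x) \<circ> r) n) < e"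
    using e unfolding Cauchy_def by blast
  have lt: "r M < r (Suc M)" using r(1) by (simp add: strict_mono_def)
  define d where "d = r (Suc M) - r M"
  have "(V ^^ r (Suc M)) x = (V ^^ r M) ((V ^^ d) x)"
  proof -
    have "r (Suc M) = r M + d" using lt d_def by simp
    then show ?thesis by (simp add: funpow_add)
  qed
  then have "(V ^^ r (Suc M)) x - (V ^^ r M) x = (V ^^ r M) ((V ^^ d) x - x)"
    by (simp add: lin')
  then have "norm ((V ^^ d) x - x) = dist ((V ^^ r (Suc M)) x) ((V ^^ r M) x)"
    by (simp add: dist_norm nrm')
  also have "\<dots> < e" using M[of "Suc M" M] by simp
  finally show ?thesis using lt d_def by (intro exI[of _ d]) auto
qed

lemma funpow_lin:
  fixes V :: "complex ^ 'n \<Rightarrow> complex ^ 'n"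
  assumes "\<And>s t. V (s - t) = V s - V t"
  shows "(V ^^ m) (s - t) = (V ^^ m) s - (V ^^ m) t"
  by (induction m arbitrary: s t) (simp_all add: assms)

lemma funpow_nrm:
  fixes V :: "'b::real_normed_vector \<Rightarrow> 'b"
  assumes "\<And>s. norm (V s) = norm s"
  shows "norm ((V ^^ m) s) = norm s"
  by (induction m) (simp_all add: assms)

lemma recur:
  fixes T :: "complex ^ 'n \<Rightarrow> complex ^ 'n"
  assumes lin: "\<And>s t. T (s - t) = T s - T t" and nrm: "\<And>s. norm (T s) = norm s"
    and e: "e > 0"
  shows "\<exists>k>N. norm ((T ^^ k) x - x) < e"
proof -
  obtain d where d: "d > 0" "norm (((T ^^ Suc N) ^^ d) x - x) < e"
    using recur_aux[of "T ^^ Suc N" e x] funpow_lin[of T] funpow_nrm[of T] lin nrm e by blast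
  have eq: "(T ^^ Suc N) ^^ d = T ^^ (Suc N * d)" by (rule funpow_mult)
  have gt: "Suc N * d > N" using d(1) by (metis Suc_le_eq le_add1 less_le_trans mult_le_mono2 nat_mult_1_right One_nat_def)
  show ?thesis using d(2) gt unfolding eq by blast
qed

definition Sset where
  "Sset s0 U F w = ({(INF i. (cmod (cinner \<psi> (run s0 U w (ns i))))\<^sup>2) | \<psi> ns.
        \<psi> \<in> F \<and> norm \<psi> = 1 \<and> strict_mono (ns :: nat \<Rightarrow> nat)} \<union> {0})"

lemma Sset_bdd:
  assumes qa: "quantum_automaton s0 U F"
  shows "bdd_above (Sset s0 U F w)"
proof (rule bdd_aboveI[of _ 1])
  fix x assume "x \<in> Sset s0 U F w"
  then show "x \<le> 1"
  proof (cases "x = 0")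
    case False
    with \<open>x \<in> Sset s0 U F w\<close> obtain \<psi> and ns :: "nat \<Rightarrow> nat" where h: "\<psi> \<in> F" "norm \<psi> = 1"
      and x: "x = (INF i. (cmod (cinner \<psi> (run s0 U w (ns i))))\<^sup>2)"
      unfolding Sset_def by auto
    have nr: "norm (run s0 U w (ns 0)) = 1" using qa run_norm
      unfolding quantum_automaton_def by metis
    have "x \<le> (cmod (cinner \<psi> (run s0 U w (ns 0))))\<^sup>2"
      unfolding x by (rule cINF_lower) (auto intro: bdd_belowI[of _ 0])
    also have "\<dots> \<le> 1" using val_le1[OF h(2) nr] by (simp add: val_def)
    finally show ?thesis .
  qed simp
qed

lemma lang_get:
  assumes qa: "quantum_automaton s0 U F" and lam: "0 \<le> lam"
    and w: "w \<in> lang_ND s0 U F lam"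
  shows "\<exists>\<psi> (ns::nat\<Rightarrow>nat) c. \<psi> \<in> F \<and> norm \<psi> = 1 \<and> strict_mono ns \<and> c > lam \<and>
            (\<forall>i. c \<le> val \<psi> (run s0 U w (ns i)))"
proof -
  have "lam < Sup (Sset s0 U F w)"
    using w unfolding lang_ND_def fND_def Sset_def by simp
  then obtain x where x: "x \<in> Sset s0 U F w" "lam < x"
  proof -
    have ne: "Sset s0 U F w \<noteq> {}" by (simp add: Sset_def)
    show ?thesis using less_cSup_iff[OF ne Sset_bdd[OF qa]] \<open>lam < Sup (Sset s0 U F w)\<close> that by blast
  qed
  then have "x \<noteq> 0" using lam by auto
  with x obtain \<psi> and ns :: "nat \<Rightarrow> nat" where h: "\<psi> \<in> F" "norm \<psi> = 1" "strict_mono ns"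
      and xd: "x = (INF i. (cmod (cinner \<psi> (run s0 U w (ns i))))\<^sup>2)"
      unfolding Sset_def by auto
  have "\<forall>i. x \<le> val \<psi> (run s0 U w (ns i))"
    unfolding xd val_def by (auto intro!: cINF_lower intro: bdd_belowI[of _ 0])
  then show ?thesis using h x by blast
qed

lemma lang_intro:
  fixes ns :: "nat \<Rightarrow> nat"
  assumes qa: "quantum_automaton s0 U F" and h: "\<psi> \<in> F" "norm \<psi> = 1" "strict_mono ns"
    and c: "c > lam" and b: "\<And>i. c \<le> val \<psi> (run s0 U w (ns i))"
  shows "w \<in> lang_ND s0 U F lam"
proof -
  let ?x = "(INF i. (cmod (cinner \<psi> (run s0 U w (ns i))))\<^sup>2)"
  have "c \<le> ?x" using b unfolding val_def by (intro cINF_greatest) auto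
  moreover have "?x \<in> Sset s0 U F w" unfolding Sset_def using h by auto
  then have "?x \<le> Sup (Sset s0 U F w)" using Sset_bdd[OF qa] by (rule cSup_upper)
  ultimately have "lam < Sup (Sset s0 U F w)" using c by linarith
  then show ?thesis unfolding lang_ND_def fND_def Sset_def by simp
qed

lemma iter_rep: "w \<noteq> [] \<Longrightarrow> w\<^sup>\<omega> = concat (replicate k w) \<frown> w\<^sup>\<omega>"
proof (induction k)
  case 0 then show ?case by simp
next
  case (Suc k)
  then have "w\<^sup>\<omega> = w \<frown> (concat (replicate k w) \<frown> w\<^sup>\<omega>)" using iter_unroll by fastforce
  then show ?case by simp
qed


lemma part1:
  fixes s0 :: "complex ^ 'n" and U :: "'a \<Rightarrow> complex ^ 'n ^ 'n"
  assumes qa: "quantum_automaton s0 U F" and lam: "0 \<le> lam"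
    and wne: "w \<noteq> []" and uv: "u \<frown> v \<in> lang_ND s0 U F lam"
  shows "infinite {k::nat. 0 < k \<and> (u @ concat (replicate k w)) \<frown> v \<in> lang_ND s0 U F lam}"
proof -
  have un: "\<forall>a. unitary (U a)" and s0n: "norm s0 = 1"
    using qa unfolding quantum_automaton_def by auto
  obtain \<psi> and ns :: "nat \<Rightarrow> nat" and c where h: "\<psi> \<in> F" "norm \<psi> = 1" "strict_mono ns"
    and c: "c > lam" and b: "\<And>i. c \<le> val \<psi> (run s0 U (u \<frown> v) (ns i))"
    using lang_get[OF qa lam uv] by blast
  define m where "m = length u"
  define su where "su = lrun s0 U u"
  define T where "T = (\<lambda>t. lrun t U w)"
  define e where "e = (c - lam) / 4"
  have e0: "e > 0" using c by (simp add: e_def)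
  have sun: "norm su = 1" using lrun_norm[OF un] s0n su_def by simp
  have Tlin: "\<And>s t. T (s - t) = T s - T t" unfolding T_def by (rule lrun_lin)
  have Tn: "\<And>s. norm (T s) = norm s" unfolding T_def using lrun_norm[OF un] by blast
  define ns' where "ns' = (\<lambda>i. ns (i + m) - m)"
  have nsge: "\<And>i. ns (i + m) \<ge> m" using seq_suble[OF h(3)] by (meson le_add2 le_trans)
  have ns'm: "strict_mono ns'"
    unfolding ns'_def strict_mono_def
  proof (intro allI impI)
    fix i j :: nat assume "i < j"
    then have "ns (i + m) < ns (j + m)" using h(3) by (simp add: strict_mono_def)
    then show "ns (i + m) - m < ns (j + m) - m" using nsge[of i] by linarith
  qed
  have bv: "c \<le> val \<psi> (run su U v (ns' i))" for i
  proof -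
    have "run s0 U (u \<frown> v) (ns (i + m)) = run s0 U (u \<frown> v) (length u + ns' i)"
      using nsge[of i] by (simp add: ns'_def m_def)
    also have "\<dots> = run su U v (ns' i)" by (simp add: run_conc su_def)
    finally show ?thesis using b[of "i + m"] by simp
  qed
  show ?thesis
    unfolding infinite_nat_iff_unbounded
  proof
    fix N
    obtain k where k: "k > N" "norm ((T ^^ k) su - su) < e"
      using recur[OF Tlin Tn e0] by blast
    define W where "W = concat (replicate k w)"
    define y where "y = (T ^^ k) su"
    have yn: "norm y = 1" unfolding y_def using funpow_nrm[of T, OF Tn] sun by simp
    have ly: "lrun s0 U (u @ W) = y"
      unfolding y_def W_def T_def by (simp add: lrun_append lrun_rep su_def)
    define ns2 where "ns2 = (\<lambda>i. length (u @ W) + ns' i)"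
    have ns2m: "strict_mono ns2" using ns'm unfolding ns2_def strict_mono_def by simp
    have "(u @ W) \<frown> v \<in> lang_ND s0 U F lam"
    proof (rule lang_intro[OF qa h(1,2) ns2m])
      show "(c + lam) / 2 > lam" using c by simp
      fix i
      have r: "run s0 U ((u @ W) \<frown> v) (ns2 i) = run y U v (ns' i)"
        unfolding ns2_def by (simp only: run_conc ly)
      have n1: "norm (run y U v (ns' i)) = 1" "norm (run su U v (ns' i)) = 1"
        using run_norm[OF un] yn sun by auto
      have "val \<psi> (run y U v (ns' i)) \<ge> val \<psi> (run su U v (ns' i)) - 2 * norm (run y U v (ns' i) - run su U v (ns' i))"
        by (rule val_lip[OF h(2) n1])
      also have "norm (run y U v (ns' i) - run su U v (ns' i)) = norm (y - su)"
        using run_lin[of y su U v "ns' i", symmetric] run_norm[OF un] by simp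
      finally have f: "val \<psi> (run y U v (ns' i)) \<ge> val \<psi> (run su U v (ns' i)) - 2 * norm (y - su)" .
      have "norm (y - su) < e" using k(2) y_def by simp
      then have "val \<psi> (run y U v (ns' i)) \<ge> c - 2 * e"
        using bv[of i] f by linarith
      then show "(c + lam) / 2 \<le> val \<psi> (run s0 U ((u @ W) \<frown> v) (ns2 i))"
        using r e_def by (simp add: field_simps)
    qed
    then show "\<exists>k>N. k \<in> {k::nat. 0 < k \<and> (u @ concat (replicate k w)) \<frown> v \<in> lang_ND s0 U F lam}"
      using k(1) W_def by (intro exI[of _ k]) auto
  qed
qed

lemma part2:
  fixes s0 :: "complex ^ 'n" and U :: "'a \<Rightarrow> complex ^ 'n ^ 'n"
  assumes qa: "quantum_automaton s0 U F" and lam: "0 \<le> lam"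
    and vL: "v \<in> lang_ND s0 U F lam"
  shows "infinite {n::nat. \<forall>w::'a list. w \<noteq> [] \<longrightarrow> prefix n v \<frown> w\<^sup>\<omega> \<in> lang_ND s0 U F lam}"
proof -
  have un: "\<forall>a. unitary (U a)" and s0n: "norm s0 = 1"
    using qa unfolding quantum_automaton_def by auto
  obtain \<psi> and ns :: "nat \<Rightarrow> nat" and c where h: "\<psi> \<in> F" "norm \<psi> = 1" "strict_mono ns"
    and c: "c > lam" and b: "\<And>i. c \<le> val \<psi> (run s0 U v (ns i))"
    using lang_get[OF qa lam vL] by blast
  define e where "e = (c - lam) / 4"
  have e0: "e > 0" using c by (simp add: e_def)
  show ?thesis
    unfolding infinite_nat_iff_unbounded
  proof
    fix N
    define n where "n = ns (Suc N)"
    have nN: "n > N" using seq_suble[OF h(3), of "Suc N"] n_def by simp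
    define sn where "sn = lrun s0 U (prefix n v)"
    have lp: "length (prefix n v) = n" by simp
    have snr: "sn = run s0 U v n"
    proof -
      have "run s0 U v n = run s0 U (prefix n v \<frown> suffix n v) n"
        using prefix_suffix[of v n] by simp
      also have "\<dots> = sn" using run_conc_take[of n "prefix n v" s0 U "suffix n v"] lp
        by (simp add: sn_def)
      finally show ?thesis by simp
    qed
    have snn: "norm sn = 1" using lrun_norm[OF un] s0n sn_def by simp
    have bsn: "c \<le> val \<psi> sn" using b[of "Suc N"] snr n_def by simp
    have "\<forall>w::'a list. w \<noteq> [] \<longrightarrow> prefix n v \<frown> w\<^sup>\<omega> \<in> lang_ND s0 U F lam"
    proof (intro allI impI)
      fix w :: "'a list" assume wne: "w \<noteq> []"
      define T where "T = (\<lambda>t. lrun t U w)"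
      have Tlin: "\<And>s t. T (s - t) = T s - T t" unfolding T_def by (rule lrun_lin)
      have Tn: "\<And>s. norm (T s) = norm s" unfolding T_def using lrun_norm[OF un] by blast
      define K where "K = {k. norm ((T ^^ k) sn - sn) < e}"
      have "infinite K" unfolding infinite_nat_iff_unbounded K_def
        using recur[OF Tlin Tn e0] by blast
      then obtain ks :: "nat \<Rightarrow> nat" where ks: "strict_mono ks" "\<And>j. ks j \<in> K"
        using infinite_enumerate by blast
      define ns2 where "ns2 = (\<lambda>j. length (prefix n v @ concat (replicate (ks j) w)))"
      have ns2m: "strict_mono ns2"
        unfolding ns2_def strict_mono_def
      proof (intro allI impI)
        fix i j :: nat assume "i < j"
        then have "ks i < ks j" using ks(1) by (simp add: strict_mono_def)
        then show "length (prefix n v @ concat (replicate (ks i) w)) < length (prefix n v @ concat (replicate (ks j) w))"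
          using wne by (simp add: length_concat sum_list_replicate)
      qed
      show "prefix n v \<frown> w\<^sup>\<omega> \<in> lang_ND s0 U F lam"
      proof (rule lang_intro[OF qa h(1,2) ns2m])
        show "(c + lam) / 2 > lam" using c by simp
        fix j
        define W where "W = concat (replicate (ks j) w)"
        define y where "y = (T ^^ ks j) sn"
        have yn: "norm y = 1" unfolding y_def using funpow_nrm[of T, OF Tn] snn by simp
        have ly: "lrun s0 U (prefix n v @ W) = y"
          unfolding y_def W_def T_def by (simp add: lrun_append lrun_rep sn_def)
        have wW: "w\<^sup>\<omega> = W \<frown> w\<^sup>\<omega>" using iter_rep[OF wne, of "ks j"] W_def by simp
        have "prefix n v \<frown> w\<^sup>\<omega> = (prefix n v @ W) \<frown> w\<^sup>\<omega>"
          by (subst wW) (rule conc_conc)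
        then have r: "run s0 U (prefix n v \<frown> w\<^sup>\<omega>) (ns2 j) = y"
          using run_conc[of s0 U "prefix n v @ W" "w\<^sup>\<omega>" 0] ly by (simp add: ns2_def W_def)
        have "val \<psi> y \<ge> val \<psi> sn - 2 * norm (y - sn)"
          by (rule val_lip[OF h(2) yn snn])
        moreover have "norm (y - sn) < e" using ks(2)[of j] unfolding K_def y_def by simp
        ultimately have "val \<psi> y \<ge> c - 2 * e" using bsn by linarith
        then show "(c + lam) / 2 \<le> val \<psi> (run s0 U (prefix n v \<frown> w\<^sup>\<omega>) (ns2 j))"
          using r e_def by (simp add: field_simps)
      qed
    qed
    then show "\<exists>n>N. n \<in> {n::nat. \<forall>w::'a list. w \<noteq> [] \<longrightarrow> prefix n v \<frown> w\<^sup>\<omega> \<in> lang_ND s0 U F lam}"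
      using nN by blast
  qed
qed

theorem theorem2:
  fixes s0 :: "complex ^ 'n" and U :: "'a::finite \<Rightarrow> complex ^ 'n ^ 'n"
    and F :: "(complex ^ 'n) set" and lam :: real
  assumes "quantum_automaton s0 U F"
    and "0 \<le> lam" and "lam < 1"
  shows "(\<forall>(w::'a list) (u::'a list) (v::'a word). w \<noteq> [] \<longrightarrow> u \<frown> v \<in> lang_ND s0 U F lam \<longrightarrow>
            infinite {k::nat. 0 < k \<and> (u @ concat (replicate k w)) \<frown> v \<in> lang_ND s0 U F lam})
       \<and> (\<forall>v \<in> lang_ND s0 U F lam.
            infinite {n::nat. \<forall>w::'a list. w \<noteq> [] \<longrightarrow> prefix n v \<frown> w\<^sup>\<omega> \<in> lang_ND s0 U F lam})"
  using part1[OF assms(1,2)] part2[OF assms(1,2)] by blast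

end
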